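(* Let $n\geq 3$, $d\geq 2$, $\ell\in\mathbb{R}_{>0}^n$, and let $P=(\mathbf{v}_1,\ldots,\mathbf{v}_{n-1})\in V_d(\ell)$ with $2\leq\dim(P)<n-1$. Set $\mathbf{v}_0=\mathbf{v}_n=\mathbf{0}$. For each $i=1,\ldots,n-1$, let $L_i$ denote the line through $\mathbf{v}_{i-1}$ and $\mathbf{v}_{i+1}$, and let $U_i$ denote the linear span of $\{\mathbf{v}_j\}_{j\neq i,\,1\leq j\leq n-1}$. Then there exists $i\in\{1,\ldots,n-1\}$ such that $\mathbf{v}_i\in U_i\setminus L_i$.
   Context: $V_d(\ell)=\{(\mathbf{v}_1,\ldots,\mathbf{v}_{n-1})\in(\mathbb{R}^d)^{n-1} : \|\mathbf{v}_i-\mathbf{v}_{i-1}\|=l_i,\ i=1,\ldots,n\}$ with $\mathbf{v}_0=\mathbf{v}_n=\mathbf{0}$. $\dim(P)$ is the dimension of the linear span of $\{\mathbf{v}_1,\ldots,\mathbf{v}_{n-1}\}$. *)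

theory Defs
  imports "HOL-Analysis.Analysis"
begin

text \<open>The configuration P = (v 1, ..., v (n-1)) is the restriction of v to {1..<n};
  values of v outside {0..n} are irrelevant.\<close>
definition in_polygon_space :: "nat \<Rightarrow> (nat \<Rightarrow> real) \<Rightarrow> (nat \<Rightarrow> 'a::euclidean_space) \<Rightarrow> bool" where
  "in_polygon_space n l v \<longleftrightarrow> v 0 = 0 \<and> v n = 0 \<and>
     (\<forall>i\<in>{1..n}. norm (v i - v (i - 1)) = l i)"

definition poly_dim :: "nat \<Rightarrow> (nat \<Rightarrow> 'a::euclidean_space) \<Rightarrow> nat" where
  "poly_dim n v = dim (span (v ` {1..<n}))"

end

theory Submission
  imports Defs
begin

lemma step_aff:
  fixes a b c :: "'a::real_vector"
  assumes "a \<noteq> b" "b \<in> affine hull {a, c}" "affine A" "a \<in> A" "b \<in> A"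
  shows "c \<in> A"
proof -
  obtain u w where uw: "b = u *\<^sub>R a + w *\<^sub>R c" "u + w = 1"
    using assms(2) unfolding affine_hull_2 by blast
  have w: "w \<noteq> 0" using uw assms(1) by auto
  have "c = (1 / w) *\<^sub>R b + (- u / w) *\<^sub>R a"
    using w uw(1) by (simp add: scaleR_add_right field_simps)
  moreover have "1 / w + (- u / w) = 1" using w uw(2) by (simp add: field_simps)
  ultimately show ?thesis using mem_affine[OF assms(3) assms(5) assms(4)] by metis
qed

lemma hull2_span:
  fixes a b :: "'a::real_vector"
  assumes "x \<in> affine hull {a, b}" "a \<in> span U" "b \<in> span U"
  shows "x \<in> span U"
proof -
  have "x \<in> span {a, b}" using assms(1) affine_hull_subset_span by blast
  moreover have "span {a, b} \<subseteq> span U"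
    using assms(2,3) by (simp add: span_minimal)
  ultimately show ?thesis by blast
qed

theorem lemma3p2:
  fixes n :: nat and l :: "nat \<Rightarrow> real" and v :: "nat \<Rightarrow> 'a::euclidean_space"
  assumes "n \<ge> 3"
    and "DIM('a) \<ge> 2"
    and "\<forall>i\<in>{1..n}. l i > 0"
    and "in_polygon_space n l v"
    and "2 \<le> poly_dim n v" and "poly_dim n v < n - 1"
  shows "\<exists>i\<in>{1..<n}. v i \<in> span (v ` ({1..<n} - {i})) \<and>
                        v i \<notin> affine hull {v (i - 1), v (i + 1)}"
proof (rule ccontr)
  assume H0: "\<not> ?thesis"
  define S where "S i \<longleftrightarrow> i \<in> {1..<n} \<and> v i \<in> span (v ` ({1..<n} - {i}))" for i
  have H: "v i \<in> affine hull {v (i - 1), v (i + 1)}" if "S i" for i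
    using H0 that unfolding S_def by blast
  have v0: "v 0 = 0" and vn: "v n = 0"
    using assms(4) unfolding in_polygon_space_def by auto
  have dist: "v i \<noteq> v (i - 1)" if "1 \<le> i" "i \<le> n" for i
  proof
    assume "v i = v (i - 1)"
    then have "l i = 0" using assms(4) that unfolding in_polygon_space_def by force
    then show False using assms(3) that by force
  qed
  have inU: "v j \<in> span (v ` ({1..<n} - {i}))" if "j < n" "j \<noteq> i" for i j
  proof (cases "j = 0")
    case True then show ?thesis using v0 by (simp add: span_zero)
  next
    case False then show ?thesis using that by (intro span_base) auto
  qed
  have "\<exists>i0. S i0"
  proof (rule ccontr)
    assume "\<nexists>i0. S i0"
    then have nS: "\<And>i. i \<in> {1..<n} \<Longrightarrow> v i \<notin> span (v ` ({1..<n} - {i}))"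
      unfolding S_def by blast
    have inj: "inj_on v {1..<n}"
    proof (rule inj_onI, rule ccontr)
      fix x y assume "x \<in> {1..<n}" "y \<in> {1..<n}" "v x = v y" "x \<noteq> y"
      then have "v x \<in> span (v ` ({1..<n} - {x}))" by (metis inU atLeastLessThan_iff)
      then show False using nS \<open>x \<in> {1..<n}\<close> by blast
    qed
    have "independent (v ` {1..<n})"
      unfolding dependent_def
    proof
      assume "\<exists>a\<in>v ` {1..<n}. a \<in> span (v ` {1..<n} - {a})"
      then obtain i where "i \<in> {1..<n}" "v i \<in> span (v ` {1..<n} - {v i})" by blast
      moreover have "v ` {1..<n} - {v i} = v ` ({1..<n} - {i})"
        using inj calculation(1) by (auto simp: inj_on_def)
      ultimately show False using nS by auto
    qed
    then have "dim (span (v ` {1..<n})) = card (v ` {1..<n})"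
      by (rule dim_span_eq_card_independent)
    also have "\<dots> = n - 1" using inj by (simp add: card_image)
    finally show False using assms(6) unfolding poly_dim_def by simp
  qed
  then obtain i0 where i0: "S i0" by blast
  have i0r: "1 \<le> i0" "i0 < n" using i0 unfolding S_def by auto
  define M where "M = {m. m < i0 \<and> (m = 0 \<or> \<not> S m)}"
  have finM: "finite M" unfolding M_def by auto
  have M0: "0 \<in> M" unfolding M_def using i0r by auto
  define p0 where "p0 = Max M"
  have "p0 \<in> M" unfolding p0_def using finM M0 Max_in by blast
  then have p0: "p0 < i0" "p0 = 0 \<or> \<not> S p0" unfolding M_def by auto
  have downS: "S j" if "p0 < j" "j \<le> i0" for j
  proof (rule ccontr)
    assume "\<not> S j"
    then have "j = i0 \<or> j \<in> M" unfolding M_def using that by auto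
    then show False using i0 \<open>\<not> S j\<close> Max_ge[OF finM, of j] that unfolding p0_def by auto
  qed
  define N where "N = {m. i0 < m \<and> m \<le> n \<and> (m = n \<or> \<not> S m)}"
  have finN: "finite N" unfolding N_def by auto
  have Nn: "n \<in> N" unfolding N_def using i0r by auto
  define q1 where "q1 = Min N"
  have "q1 \<in> N" unfolding q1_def using finN Nn Min_in by blast
  then have q1: "i0 < q1" "q1 \<le> n" "q1 = n \<or> \<not> S q1" unfolding N_def by auto
  have upS: "S j" if "i0 < j" "j < q1" for j
  proof (rule ccontr)
    assume "\<not> S j"
    then have "j \<in> N" unfolding N_def using that q1 by auto
    then show False using Min_le[OF finN, of j] that unfolding q1_def by auto
  qed
  have allS: "S j" if "p0 < j" "j < q1" for j
    using downS upS that by (cases "j \<le> i0") auto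
  define A where "A = affine hull {v p0, v (Suc p0)}"
  have affA: "affine A" unfolding A_def by simp
  have walk: "p0 + 1 + k \<le> q1 \<longrightarrow> v (p0 + 1 + k) \<in> A \<and> v (p0 + k) \<in> A" for k
  proof (induction k)
    case 0
    then show ?case unfolding A_def by (simp add: hull_inc)
  next
    case (Suc k)
    show ?case
    proof
      assume le: "p0 + 1 + Suc k \<le> q1"
      define m where "m = p0 + 1 + k"
      have Sm: "S m" using allS[of m] le unfolding m_def by auto
      have h: "v m \<in> affine hull {v (p0 + k), v (m + 1)}"
        using H[OF Sm] unfolding m_def by simp
      have d: "v (p0 + k) \<noteq> v m" using dist[of m] le q1 unfolding m_def by auto
      have IH: "v m \<in> A" "v (p0 + k) \<in> A" using Suc.IH le unfolding m_def by auto
      have "v (m + 1) \<in> A" using step_aff[OF d h affA IH(2) IH(1)] .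
      then show "v (p0 + 1 + Suc k) \<in> A \<and> v (p0 + Suc k) \<in> A"
        using IH unfolding m_def by simp
    qed
  qed
  have vA: "v j \<in> A" if "p0 < j" "j \<le> q1" for j
    using walk[of "j - p0 - 1"] that by simp
  show False
  proof (cases "q1 < n")
    case True
    then have nq: "\<not> S q1" "1 \<le> q1" using q1 i0r by auto
    have "v q1 \<in> span (v ` ({1..<n} - {q1}))"
      using hull2_span[OF vA[of q1, unfolded A_def]] inU[of p0 q1] inU[of "Suc p0" q1]
        p0 q1 i0r True by auto
    then show False using nq True unfolding S_def by auto
  next
    case False
    then have qn: "q1 = n" using q1 by auto
    have zA: "0 \<in> A" using vA[of n] qn vn p0 i0r by auto
    show False
    proof (cases "p0 = 0")
      case True
      have sub: "v ` {1..<n} \<subseteq> span {v 1}"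
      proof
        fix x assume "x \<in> v ` {1..<n}"
        then obtain j where j: "j \<in> {1..<n}" "x = v j" by blast
        have "v j \<in> A" using vA[of j] j True qn by auto
        then show "x \<in> span {v 1}"
          using hull2_span[of "v j" "v 0" "v 1" "{v 1}"] j True v0 unfolding A_def
          by (simp add: span_zero span_base)
      qed
      then have "span (v ` {1..<n}) \<subseteq> span {v 1}"
        by (simp add: span_minimal)
      then have "dim (span (v ` {1..<n})) \<le> card {v 1}"
        by (intro dim_le_card) auto
      then show False using assms(5) unfolding poly_dim_def by simp
    next
      case False
      then have np: "\<not> S p0" "p0 \<in> {1..<n}" using p0 i0r by auto
      obtain u w where uw: "0 = u *\<^sub>R v p0 + w *\<^sub>R v (Suc p0)" "u + w = 1"
        using zA unfolding A_def affine_hull_2 by blast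
      show False
      proof (cases "u = 0")
        case False
        have "(1 / u) *\<^sub>R (u *\<^sub>R v p0 + w *\<^sub>R v (Suc p0)) = 0"
          using uw(1) by simp
        then have "v p0 + (w / u) *\<^sub>R v (Suc p0) = 0"
          using False by (simp add: scaleR_add_right)
        then have "v p0 = (- w / u) *\<^sub>R v (Suc p0)"
          by (simp add: eq_neg_iff_add_eq_0[symmetric])
        moreover have "v (Suc p0) \<in> span (v ` ({1..<n} - {p0}))"
          using inU[of "Suc p0" p0] p0 i0r by auto
        ultimately have "v p0 \<in> span (v ` ({1..<n} - {p0}))"
          by (metis span_mul)
        then show False using np unfolding S_def by auto
      next
        case True
        then have vs0: "v (Suc p0) = 0" using uw by simp
        have "v (n - 1) \<in> A" using vA[of "n - 1"] p0 i0r qn by auto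
        then obtain a b where ab: "v (n - 1) = a *\<^sub>R v p0 + b *\<^sub>R v (Suc p0)"
          unfolding A_def affine_hull_2 by blast
        then have ab': "v (n - 1) = a *\<^sub>R v p0" using vs0 by simp
        have "v (n - 1) \<noteq> 0" using dist[of n] vn assms(1) by auto
        then have a0: "a \<noteq> 0" using ab' by auto
        have "v p0 = (1 / a) *\<^sub>R v (n - 1)" using ab' a0 by simp
        moreover have "v (n - 1) \<in> span (v ` ({1..<n} - {p0}))"
          using inU[of "n - 1" p0] p0 i0r by auto
        ultimately have "v p0 \<in> span (v ` ({1..<n} - {p0}))"
          by (simp add: span_mul)
        then show False using np unfolding S_def by auto
      qed
    qed
  qed
qed

end
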